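(* Let $u$ and $v$ be monomials and let $h_1,\dots,h_m\in\{x_1,\dots,x_n\}$. (i) If $\tilde p_{x_i,x_j}=1$ for all $x_i\in\mu(u)$ and all $x_j\in\mu(v)$, then $[u,v]=0$ in $\mathfrak{B}(V)$. (ii) If the monomial $h_1h_2\cdots h_m$ is disconnected, then $\sigma(h_1,\dots,h_m)=0$ for every full bracketing $\sigma$ of $h_1,\dots,h_m$ (in this order) by the bracket $[\,,\,]$. (iii) If $h_1h_2\cdots h_m\neq 0$ in $\mathfrak{B}(V)$ and $h_1h_2\cdots h_m$ is disconnected, then $h_1h_2\cdots h_m\notin\mathfrak{L}(V)$.
   Context: $F$ is an algebraically closed field of characteristic $0$. $V$ is a braided vector space of diagonal type with basis $x_1,\dots,x_n$ and braiding $C(x_i\otimes x_j)=q_{ij}x_j\otimes x_i$, $q_{ij}\in F^*$; $\mathfrak{B}(V)$ is its Nichols algebra, $\mathbb{Z}^n$-graded with $\deg x_i=e_i$. Let $\chi$ be the bicharacter of $\mathbb{Z}^n$ with $\chi(e_i,e_j)=q_{ij}$; put $p_{ij}:=q_{ij}$, $p_{uv}:=\chi(\deg u,\deg v)$ for homogeneous $u,v$, and $\tilde p_{x_i,x_j}:=p_{ij}p_{ji}$ (also for $i=j$). For homogeneous $x,y\in\mathfrak{B}(V)$ put $[x,y]:=yx-p_{yx}xy$; the Nichols braided Lie algebra $\mathfrak{L}(V)$ is the linear span in $\mathfrak{B}(V)$ of all iterated brackets (with any bracketing) of elements of $\{x_1,\dots,x_n\}$. A monomial is a word $u=h_1\cdots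 h_m$ ($m\ge1$, $h_j\in\{x_1,\dots,x_n\}$), also regarded as an element of $\mathfrak{B}(V)$; $\mu(u)$ is the set of letters occurring in the word. The pure generalized Dynkin graph $\Gamma(V)$ has vertex set $\{1,\dots,n\}$ and an edge $\{i,j\}$ ($i\neq j$) iff $p_{ij}p_{ji}\neq1$. A monomial $u$ is connected if the subgraph of $\Gamma(V)$ induced on $\{i: x_i\in\mu(u)\}$ is connected (a single vertex counts as connected), and disconnected otherwise. *)

theory Defs
  imports "HOL-Computational_Algebra.Polynomial" "HOL-Library.Function_Algebras" "HOL-Combinatorics.Permutations"
begin

(* Letters x_1..x_n are encoded as naturals 0..n-1; a word (monomial) is a nat list.
   Elements of the tensor algebra T(V) are coefficient functions  nat list => 'a
   (only finitely supported ones are ever built below); all operations are pointwise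
   or finite sums over splittings / permutations of a word. *)

type_synonym 'a tens = "nat list \<Rightarrow> 'a"

definition word_mono :: "nat list \<Rightarrow> 'a::field tens" where
  "word_mono w = (\<lambda>u. if u = w then 1 else 0)"

definition smul :: "'a::field \<Rightarrow> 'a tens \<Rightarrow> 'a tens" where
  "smul c f = (\<lambda>w. c * f w)"

(* multiplication in T(V): concatenation of words *)
definition tmul :: "'a::field tens \<Rightarrow> 'a tens \<Rightarrow> 'a tens" where
  "tmul f g = (\<lambda>w. \<Sum>k\<le>length w. f (take k w) * g (drop k w))"

(* chi(deg xs, deg ys) for words xs, ys *)
definition chi :: "(nat \<Rightarrow> nat \<Rightarrow> 'a::field) \<Rightarrow> nat list \<Rightarrow> nat list \<Rightarrow> 'a" where
  "chi q xs ys = (\<Prod>a\<leftarrow>xs. \<Prod>b\<leftarrow>ys. q a b)"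

(* braided bracket [x,y] = yx - p_{yx} xy, for x homogeneous of degree deg xs and
   y homogeneous of degree deg ys *)
definition lbr :: "(nat \<Rightarrow> nat \<Rightarrow> 'a::field) \<Rightarrow> nat list \<Rightarrow> nat list \<Rightarrow> 'a tens \<Rightarrow> 'a tens \<Rightarrow> 'a tens" where
  "lbr q xs ys x y = tmul y x - smul (chi q ys xs) (tmul x y)"

(* Quantum symmetrizer S_m = sum over sigma in S_m of T_sigma (Matsumoto lift of the
   diagonal braiding).  T_sigma sends the word u to the word with letter u!a at position
   sigma a, times the product of q (u!a) (u!b) over the inverted pairs a<b, sigma b < sigma a. *)
definition perm_word :: "(nat \<Rightarrow> nat) \<Rightarrow> nat list \<Rightarrow> nat list" where
  "perm_word \<sigma> w = map (\<lambda>a. w ! \<sigma> a) [0..<length w]"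

definition sym_coef :: "(nat \<Rightarrow> nat \<Rightarrow> 'a::field) \<Rightarrow> (nat \<Rightarrow> nat) \<Rightarrow> nat list \<Rightarrow> 'a" where
  "sym_coef q \<sigma> u = (\<Prod>(a,b)\<in>{(a,b). a < b \<and> b < length u \<and> \<sigma> b < \<sigma> a}. q (u!a) (u!b))"

definition qsym :: "(nat \<Rightarrow> nat \<Rightarrow> 'a::field) \<Rightarrow> 'a tens \<Rightarrow> 'a tens" where
  "qsym q f = (\<lambda>w. \<Sum>\<sigma>\<in>{\<sigma>. \<sigma> permutes {..<length w}}.
                 sym_coef q \<sigma> (perm_word \<sigma> w) * f (perm_word \<sigma> w))"

(* f = 0 in the Nichols algebra B(V) = T(V) / (sum_m ker S_m); since S preserves word
   length, this is equivalent to every homogeneous component lying in ker S_m. *)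
definition nichols_zero :: "(nat \<Rightarrow> nat \<Rightarrow> 'a::field) \<Rightarrow> 'a tens \<Rightarrow> bool" where
  "nichols_zero q f \<longleftrightarrow> qsym q f = (\<lambda>_. 0)"

inductive bracketing :: "(nat \<Rightarrow> nat \<Rightarrow> 'a::field) \<Rightarrow> nat list \<Rightarrow> 'a tens \<Rightarrow> bool"
  for q where
  leaf: "bracketing q [h] (word_mono [h])"
| node: "bracketing q xs x \<Longrightarrow> bracketing q ys y \<Longrightarrow> bracketing q (xs @ ys) (lbr q xs ys x y)"

definition lin_span :: "'a::field tens set \<Rightarrow> 'a tens set" where
  "lin_span S = {f. \<exists>(k::nat) c b. (\<forall>i<k. b i \<in> S) \<and> f = (\<Sum>i<k. smul (c i) (b i))}"

definition in_nichols_lie :: "(nat \<Rightarrow> nat \<Rightarrow> 'a::field) \<Rightarrow> nat \<Rightarrow> 'a tens \<Rightarrow> bool" where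
  "in_nichols_lie q n f \<longleftrightarrow>
     (\<exists>g \<in> lin_span {s. \<exists>h. h \<noteq> [] \<and> set h \<subseteq> {..<n} \<and> bracketing q h s}.
        nichols_zero q (f - g))"

definition dynkin_edges :: "(nat \<Rightarrow> nat \<Rightarrow> 'a::field) \<Rightarrow> nat set \<Rightarrow> (nat \<times> nat) set" where
  "dynkin_edges q S = {(i,j). i \<in> S \<and> j \<in> S \<and> i \<noteq> j \<and> q i j * q j i \<noteq> 1}"

definition connected_mono :: "(nat \<Rightarrow> nat \<Rightarrow> 'a::field) \<Rightarrow> nat list \<Rightarrow> bool" where
  "connected_mono q u \<longleftrightarrow> (\<forall>i\<in>set u. \<forall>j\<in>set u. (i,j) \<in> (dynkin_edges q (set u))\<^sup>*)"

end

theory Submission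
  imports Defs
begin


lemma perm_word_length[simp]: "length (perm_word \<sigma> w) = length w"
  by (simp add: perm_word_def)

lemma perm_word_nth[simp]: "i < length w \<Longrightarrow> perm_word \<sigma> w ! i = w ! \<sigma> i"
  by (simp add: perm_word_def)

lemma perm_word_comp:
  assumes "\<tau> permutes {..<length w}"
  shows "perm_word (\<sigma> \<circ> \<tau>) w = perm_word \<tau> (perm_word \<sigma> w)"
proof (rule nth_equalityI)
  fix i assume "i < length (perm_word (\<sigma> \<circ> \<tau>) w)"
  then have i: "i < length w" by simp
  then have "\<tau> i < length w" using permutes_in_image[OF assms] by auto
  then show "perm_word (\<sigma> \<circ> \<tau>) w ! i = perm_word \<tau> (perm_word \<sigma> w) ! i"
    using i by simp
qed simp

definition tsw :: "nat \<Rightarrow> nat \<Rightarrow> nat" where "tsw k = Transposition.transpose k (Suc k)"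

lemma tsw_permutes: "Suc k < m \<Longrightarrow> tsw k permutes {..<m}"
  unfolding tsw_def by (rule permutes_swap_id) auto

lemma tsw_apply: "tsw k x = (if x = k then Suc k else if x = Suc k then k else x)"
  by (simp add: tsw_def Transposition.transpose_def)

lemma tsw_inv[simp]: "tsw k (tsw k x) = x"
  by (simp add: tsw_def)

lemma tsw_comp[simp]: "tsw k \<circ> tsw k = id"
  by (simp add: tsw_def)

lemma perm_tsw_W:
  "perm_word (tsw (length p)) (p @ [b, a] @ s) = p @ [a, b] @ s"
proof (rule nth_equalityI)
  fix i assume "i < length (perm_word (tsw (length p)) (p @ [b, a] @ s))"
  then have i: "i < length p + 2 + length s" by simp
  show "perm_word (tsw (length p)) (p @ [b, a] @ s) ! i = (p @ [a, b] @ s) ! i"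
    using i by (auto simp: tsw_apply nth_append nth_Cons split: nat.splits)
qed simp

lemma coef_swap:
  fixes q :: "nat \<Rightarrow> nat \<Rightarrow> 'a::field"
  assumes sig: "\<sigma> permutes {..<length W1}" and k: "Suc k < length W1"
    and b: "W1 ! k = b" and a: "W1 ! Suc k = a" and W2: "W2 = perm_word (tsw k) W1"
    and qq: "q a b * q b a = 1"
  shows "sym_coef q \<sigma> W1 = q b a * sym_coef q (\<sigma> \<circ> tsw k) W2"
proof -
  define m where "m = length W1"
  define \<tau> where "\<tau> = tsw k"
  define I1 where "I1 = {(x,y). x < y \<and> y < m \<and> \<sigma> y < \<sigma> x}"
  define I2 where "I2 = {(x,y). x < y \<and> y < m \<and> \<sigma> (\<tau> y) < \<sigma> (\<tau> x)}"
  define F1 where "F1 = (\<lambda>(x,y). q (W1!x) (W1!y))"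
  define F2 where "F2 = (\<lambda>(x,y). q (W2!x) (W2!y))"
  define P where "P = (k, Suc k)"
  have c1: "sym_coef q \<sigma> W1 = prod F1 I1"
    unfolding sym_coef_def I1_def F1_def m_def by simp
  have c2: "sym_coef q (\<sigma> \<circ> tsw k) W2 = prod F2 I2"
    unfolding sym_coef_def I2_def F2_def m_def \<tau>_def W2 by simp
  have fin1: "finite I1" by (rule finite_subset[of _ "{..<m} \<times> {..<m}"]) (auto simp: I1_def)
  have fin2: "finite I2" by (rule finite_subset[of _ "{..<m} \<times> {..<m}"]) (auto simp: I2_def)
  have ord: "\<tau> x < \<tau> y" if "x < y" "(x,y) \<noteq> P" for x y
    using that by (auto simp: \<tau>_def tsw_apply P_def)
  have lt: "\<tau> y < m" if "y < m" for y
    using that k by (auto simp: \<tau>_def tsw_apply m_def)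
  have F2F1: "F2 (x,y) = F1 (\<tau> x, \<tau> y)" if "x < m" "y < m" for x y
    using that by (simp add: F1_def F2_def W2 \<tau>_def m_def)
  have rest: "prod F2 (I2 - {P}) = prod F1 (I1 - {P})"
  proof (rule prod.reindex_bij_witness[of _ "\<lambda>(x,y). (\<tau> x, \<tau> y)" "\<lambda>(x,y). (\<tau> x, \<tau> y)"])
    fix z assume z: "z \<in> I1 - {P}"
    then obtain x y where xy: "z = (x,y)" by (cases z)
    show "(case (case z of (x, y) \<Rightarrow> (\<tau> x, \<tau> y)) of (x, y) \<Rightarrow> (\<tau> x, \<tau> y)) = z"
      by (simp add: xy \<tau>_def)
    have "x < y" "y < m" "(x,y) \<noteq> P" "\<sigma> y < \<sigma> x" using z xy by (auto simp: I1_def)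
    moreover have "(\<tau> x, \<tau> y) \<noteq> P" using \<open>x<y\<close> by (auto simp: P_def \<tau>_def tsw_apply split: if_splits)
    ultimately show "(case z of (x, y) \<Rightarrow> (\<tau> x, \<tau> y)) \<in> I2 - {P}"
      using ord lt by (auto simp: xy I2_def \<tau>_def)
  next
    fix z assume z: "z \<in> I2 - {P}"
    then obtain x y where xy: "z = (x,y)" by (cases z)
    show "(case (case z of (x, y) \<Rightarrow> (\<tau> x, \<tau> y)) of (x, y) \<Rightarrow> (\<tau> x, \<tau> y)) = z"
      by (simp add: xy \<tau>_def)
    have "x < y" "y < m" "(x,y) \<noteq> P" "\<sigma> (\<tau> y) < \<sigma> (\<tau> x)" using z xy by (auto simp: I2_def)
    moreover have "(\<tau> x, \<tau> y) \<noteq> P" using \<open>x<y\<close> by (auto simp: P_def \<tau>_def tsw_apply split: if_splits)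
    ultimately show "(case z of (x, y) \<Rightarrow> (\<tau> x, \<tau> y)) \<in> I1 - {P}"
      using ord lt by (auto simp: xy I1_def)
    show "F1 (case z of (x, y) \<Rightarrow> (\<tau> x, \<tau> y)) = F2 z"
      using F2F1[of x y] \<open>y<m\<close> \<open>x<y\<close> by (simp add: xy)
  qed
  have inj: "\<sigma> k \<noteq> \<sigma> (Suc k)" using permutes_inj[OF sig] by (auto dest: injD)
  have F1P: "F1 P = q b a" using a b by (simp add: F1_def P_def)
  have F2P: "F2 P = q a b" using a b k by (simp add: F2_def P_def W2 tsw_apply)
  have tk: "\<tau> k = Suc k" "\<tau> (Suc k) = k" by (auto simp: \<tau>_def tsw_apply)
  show ?thesis
  proof (cases "\<sigma> (Suc k) < \<sigma> k")
    case True
    then have "P \<in> I1" "P \<notin> I2" using k tk by (auto simp: I1_def I2_def P_def m_def)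
    then have "prod F1 I1 = F1 P * prod F1 (I1 - {P})" "I2 - {P} = I2"
      using prod.remove[OF fin1, of P F1] by auto
    then show ?thesis using c1 c2 rest F1P by simp
  next
    case False
    then have "\<sigma> k < \<sigma> (Suc k)" using inj by simp
    then have "P \<notin> I1" "P \<in> I2" using k tk by (auto simp: I1_def I2_def P_def m_def)
    then have "prod F2 I2 = F2 P * prod F2 (I2 - {P})" "I1 - {P} = I1"
      using prod.remove[OF fin2, of P F2] by auto
    then have "sym_coef q (\<sigma> \<circ> tsw k) W2 = q a b * prod F1 I1" using c1 c2 rest F2P by simp
    then have "q b a * sym_coef q (\<sigma> \<circ> tsw k) W2 = (q a b * q b a) * prod F1 I1"
      by (simp add: ac_simps)
    then show ?thesis using qq c1 by simp
  qed
qed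



lemma qsym_add: "qsym q (f + g) = qsym q f + qsym q g"
  by (simp add: qsym_def fun_eq_iff algebra_simps sum.distrib)
lemma qsym_diff: "qsym q (f - g) = qsym q f - qsym q g"
  by (simp add: qsym_def fun_eq_iff algebra_simps sum_subtractf)
lemma qsym_smul: "qsym q (smul c f) = smul c (qsym q f)"
  by (simp add: qsym_def smul_def fun_eq_iff algebra_simps sum_distrib_left)
lemma qsym_zero: "qsym q (\<lambda>_. 0) = (\<lambda>_. 0)"
  by (simp add: qsym_def fun_eq_iff)
lemma smul_smul: "smul c (smul d f) = smul (c*d) f"
  by (simp add: smul_def fun_eq_iff)

lemma swap1:
  fixes q :: "nat \<Rightarrow> nat \<Rightarrow> 'a::field"
  assumes qq: "q a b * q b a = 1"
  shows "qsym q (word_mono (p@[b,a]@s)) = smul (q b a) (qsym q (word_mono (p@[a,b]@s)))"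
proof (rule ext)
  fix w :: "nat list"
  define W1 where "W1 = p@[b,a]@s"
  define W2 where "W2 = p@[a,b]@s"
  define k where "k = length p"
  define \<tau> where "\<tau> = tsw k"
  have W2: "W2 = perm_word \<tau> W1" unfolding W1_def W2_def \<tau>_def k_def using perm_tsw_W[of p b a s] by simp
  have lenW: "length W2 = length W1" by (simp add: W1_def W2_def)
  show "qsym q (word_mono W1) w = smul (q b a) (qsym q (word_mono W2)) w"
  proof (cases "length w = length W1")
    case False
    then have "\<And>\<sigma>. word_mono W1 (perm_word \<sigma> w) = (0::'a)" "\<And>\<sigma>. word_mono W2 (perm_word \<sigma> w) = (0::'a)"
      using lenW by (auto simp: word_mono_def)
    then show ?thesis by (simp add: qsym_def smul_def)
  next
    case True
    define m where "m = length w"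
    have km: "Suc k < m" using True by (simp add: m_def W1_def k_def)
    have tp: "\<tau> permutes {..<m}" using km by (simp add: \<tau>_def tsw_permutes)
    have "qsym q (word_mono W2) w = (\<Sum>\<sigma>\<in>{\<sigma>. \<sigma> permutes {..<m}}.
            sym_coef q (\<sigma> \<circ> \<tau>) (perm_word (\<sigma> \<circ> \<tau>) w) * word_mono W2 (perm_word (\<sigma> \<circ> \<tau>) w))"
      unfolding qsym_def m_def[symmetric]
    proof (rule sum.reindex_bij_witness[of _ "\<lambda>\<sigma>. \<sigma> \<circ> \<tau>" "\<lambda>\<sigma>. \<sigma> \<circ> \<tau>"])
      show "\<And>a. a \<in> {\<sigma>. \<sigma> permutes {..<m}} \<Longrightarrow> a \<circ> \<tau> \<circ> \<tau> = a"
        by (simp add: \<tau>_def comp_assoc)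
      show "\<And>a. a \<in> {\<sigma>. \<sigma> permutes {..<m}} \<Longrightarrow> a \<circ> \<tau> \<in> {\<sigma>. \<sigma> permutes {..<m}}"
        using tp by (simp add: permutes_compose)
    qed (simp_all add: \<tau>_def comp_assoc tp[unfolded \<tau>_def] permutes_compose)
    also have "\<dots> = (\<Sum>\<sigma>\<in>{\<sigma>. \<sigma> permutes {..<m}}.
            sym_coef q (\<sigma> \<circ> \<tau>) (perm_word \<tau> (perm_word \<sigma> w)) * word_mono W2 (perm_word \<tau> (perm_word \<sigma> w)))"
      using tp by (simp add: perm_word_comp m_def)
    finally have R: "smul (q b a) (qsym q (word_mono W2)) w = (\<Sum>\<sigma>\<in>{\<sigma>. \<sigma> permutes {..<m}}.
            q b a * (sym_coef q (\<sigma> \<circ> \<tau>) (perm_word \<tau> (perm_word \<sigma> w)) * word_mono W2 (perm_word \<tau> (perm_word \<sigma> w))))"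
      by (simp add: smul_def sum_distrib_left)
    have invX: "perm_word \<tau> (perm_word \<tau> X) = X" if "length X = m" for X
    proof -
      have "perm_word \<tau> (perm_word \<tau> X) = perm_word (\<tau> \<circ> \<tau>) X"
        using tp that by (simp add: perm_word_comp)
      also have "\<dots> = X" by (simp add: \<tau>_def perm_word_def map_nth)
      finally show ?thesis .
    qed
    have L: "qsym q (word_mono W1) w = (\<Sum>\<sigma>\<in>{\<sigma>. \<sigma> permutes {..<m}}.
        sym_coef q \<sigma> (perm_word \<sigma> w) * word_mono W1 (perm_word \<sigma> w))"
      by (simp add: qsym_def m_def)
    show ?thesis unfolding R L
    proof (rule sum.cong[OF refl])
      fix \<sigma> assume s: "\<sigma> \<in> {\<sigma>. \<sigma> permutes {..<m}}"
      define X where "X = perm_word \<sigma> w"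
      have lX: "length X = m" by (simp add: X_def m_def)
      show "sym_coef q \<sigma> (perm_word \<sigma> w) * word_mono W1 (perm_word \<sigma> w) =
         q b a * (sym_coef q (\<sigma> \<circ> \<tau>) (perm_word \<tau> (perm_word \<sigma> w)) * word_mono W2 (perm_word \<tau> (perm_word \<sigma> w)))"
      proof (cases "X = W1")
        case True
        have "sym_coef q \<sigma> W1 = q b a * sym_coef q (\<sigma> \<circ> tsw k) W2"
          apply (rule coef_swap[where q=q and a=a and b=b])
          using s True lX km W2 qq by (auto simp: \<tau>_def W1_def k_def nth_append)
        then show ?thesis using True W2 X_def by (simp add: word_mono_def \<tau>_def)
      next
        case False
        have "length W1 = m" using True m_def by simp
        then have "perm_word \<tau> W2 = W1" using invX W2 by simp
        then have "perm_word \<tau> X \<noteq> W2" using invX[OF lX] False by metis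
        then show ?thesis using False X_def by (simp add: word_mono_def)
      qed
    qed
  qed
qed



lemma swapA:
  fixes q :: "nat \<Rightarrow> nat \<Rightarrow> 'a::field"
  assumes "\<forall>a\<in>set u. q a b * q b a = 1"
  shows "qsym q (word_mono (p @ b # u @ s)) = smul (\<Prod>a\<leftarrow>u. q b a) (qsym q (word_mono (p @ u @ b # s)))"
  using assms
proof (induction u arbitrary: p)
  case Nil
  then show ?case by (simp add: smul_def)
next
  case (Cons a u)
  have "qsym q (word_mono (p @ b # (a # u) @ s)) = qsym q (word_mono (p @ [b,a] @ (u @ s)))" by simp
  also have "\<dots> = smul (q b a) (qsym q (word_mono (p @ [a,b] @ (u @ s))))"
    using Cons.prems by (intro swap1) simp
  also have "p @ [a,b] @ (u @ s) = (p @ [a]) @ b # u @ s" by simp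
  also have "qsym q (word_mono ((p @ [a]) @ b # u @ s)) = smul (\<Prod>a\<leftarrow>u. q b a) (qsym q (word_mono ((p@[a]) @ u @ b # s)))"
    using Cons.IH[of "p@[a]"] Cons.prems by simp
  finally show ?case by (simp add: smul_smul)
qed

lemma chi_Cons: "chi q (b # v) u = (\<Prod>a\<leftarrow>u. q b a) * chi q v u"
  by (simp add: chi_def)

lemma swapB:
  fixes q :: "nat \<Rightarrow> nat \<Rightarrow> 'a::field"
  assumes "\<forall>a\<in>set u. \<forall>b\<in>set v. q a b * q b a = 1"
  shows "qsym q (word_mono (p @ v @ u @ s)) = smul (chi q v u) (qsym q (word_mono (p @ u @ v @ s)))"
  using assms
proof (induction v arbitrary: p)
  case Nil
  then show ?case by (simp add: smul_def chi_def)
next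
  case (Cons b v)
  have "qsym q (word_mono (p @ (b#v) @ u @ s)) = qsym q (word_mono ((p @ [b]) @ v @ u @ s))" by simp
  also have "\<dots> = smul (chi q v u) (qsym q (word_mono ((p @ [b]) @ u @ v @ s)))"
    using Cons.IH[of "p@[b]"] Cons.prems by simp
  also have "(p @ [b]) @ u @ v @ s = p @ b # u @ (v @ s)" by simp
  also have "qsym q (word_mono (p @ b # u @ (v @ s))) = smul (\<Prod>a\<leftarrow>u. q b a) (qsym q (word_mono (p @ u @ b # v @ s)))"
    using Cons.prems by (intro swapA) auto
  finally show ?case by (simp add: smul_smul chi_Cons mult.commute)
qed

lemma tmul_word: "tmul (word_mono u) (word_mono v) = (word_mono (u @ v) :: 'a::field tens)"
proof (rule ext)
  fix w :: "nat list"
  have eq: "(take k w = u \<and> drop k w = v) \<longleftrightarrow> (k = length u \<and> w = u @ v)" if "k \<le> length w" for k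
    using that by (auto simp: min_def)
  have "tmul (word_mono u) (word_mono v) w = (\<Sum>k\<le>length w. if k = length u \<and> w = u @ v then 1 else (0::'a))"
    unfolding tmul_def word_mono_def by (rule sum.cong) (use eq in auto)
  also have "\<dots> = word_mono (u @ v) w"
    by (cases "w = u @ v") (auto simp: word_mono_def)
  finally show "tmul (word_mono u) (word_mono v) w = (word_mono (u @ v) w :: 'a)" .
qed

lemma tmul_add1: "tmul (f + g) h = tmul f h + tmul g h"
  by (simp add: tmul_def fun_eq_iff algebra_simps sum.distrib)
lemma tmul_add2: "tmul h (f + g) = tmul h f + tmul h g"
  by (simp add: tmul_def fun_eq_iff algebra_simps sum.distrib)
lemma tmul_diff1: "tmul (f - g) h = tmul f h - tmul g h"
  by (simp add: tmul_def fun_eq_iff algebra_simps sum_subtractf)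
lemma tmul_diff2: "tmul h (f - g) = tmul h f - tmul h g"
  by (simp add: tmul_def fun_eq_iff algebra_simps sum_subtractf)
lemma tmul_smul1: "tmul (smul c f) h = smul c (tmul f h)"
  by (simp add: tmul_def smul_def fun_eq_iff algebra_simps sum_distrib_left)
lemma tmul_smul2: "tmul h (smul c f) = smul c (tmul h f)"
  by (simp add: tmul_def smul_def fun_eq_iff algebra_simps sum_distrib_left)
lemma tmul_zero1: "tmul (\<lambda>_. 0) h = (\<lambda>_. 0)"
  by (simp add: tmul_def fun_eq_iff)
lemma tmul_zero2: "tmul h (\<lambda>_. 0) = (\<lambda>_. 0)"
  by (simp add: tmul_def fun_eq_iff)
lemma smul_diff: "smul c (f - g) = smul c f - smul c g"
  by (simp add: smul_def fun_eq_iff algebra_simps)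
lemma smul_add: "smul c (f + g) = smul c f + smul c g"
  by (simp add: smul_def fun_eq_iff algebra_simps)
lemma smul_zero: "smul c (\<lambda>_. 0) = (\<lambda>_. (0::'a::field))"
  by (simp add: smul_def fun_eq_iff)

lemma chi_mset:
  assumes "mset xs = mset xs'" "mset ys = mset ys'"
  shows "chi q xs ys = chi q xs' ys'"
proof -
  have P: "prod_list (map f l) = prod_list (map f l')" if "mset l = mset l'" for f :: "nat \<Rightarrow> 'b::comm_monoid_mult" and l l'
    by (metis mset_map prod_mset_prod_list that)
  have "chi q xs ys = chi q xs' ys" unfolding chi_def by (rule P[OF assms(1)])
  also have "\<dots> = chi q xs' ys'" unfolding chi_def by (intro arg_cong[where f=prod_list] map_cong refl P[OF assms(2)])
  finally show ?thesis .
qed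

lemma eta_add: "(\<lambda>a. f a + g a) = f + (g :: 'a::field tens)" by (simp add: fun_eq_iff)
lemma eta_diff: "(\<lambda>a. f a - g a) = f - (g :: 'a::field tens)" by (simp add: fun_eq_iff)
lemma eta_sm: "(\<lambda>a. c * f a) = smul c (f :: 'a::field tens)" by (simp add: fun_eq_iff smul_def)

inductive inJ :: "(nat \<Rightarrow> nat \<Rightarrow> 'a::field) \<Rightarrow> 'a tens \<Rightarrow> bool" for q where
  gen: "(\<forall>a\<in>set u. \<forall>b\<in>set v. q a b * q b a = 1) \<Longrightarrow>
        inJ q (word_mono (p @ v @ u @ s) - smul (chi q v u) (word_mono (p @ u @ v @ s)))"
| zero: "inJ q (\<lambda>_. 0)"
| add: "inJ q f \<Longrightarrow> inJ q g \<Longrightarrow> inJ q (f + g)"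
| sm: "inJ q f \<Longrightarrow> inJ q (smul c f)"

lemma inJ_nz: "inJ q f \<Longrightarrow> nichols_zero q f"
proof (induction rule: inJ.induct)
  case (gen u v p s)
  then show ?case by (simp only: nichols_zero_def qsym_diff qsym_smul swapB[OF gen] diff_self) (simp add: zero_fun_def)
qed (simp_all add: nichols_zero_def qsym_add qsym_smul qsym_zero eta_add eta_sm, simp_all add: smul_def zero_fun_def)

lemma inJ_diff: "inJ q f \<Longrightarrow> inJ q g \<Longrightarrow> inJ q (f - g)"
proof -
  assume "inJ q f" "inJ q g"
  then have "inJ q (f + smul (-1) g)" by (intro inJ.add inJ.sm)
  moreover have "f + smul (-1) g = f - g" by (simp add: smul_def fun_eq_iff)
  ultimately show ?thesis by simp
qed

lemma inJ_lword: "inJ q f \<Longrightarrow> inJ q (tmul (word_mono w) f)"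
proof (induction rule: inJ.induct)
  case (gen u v p s)
  have "inJ q (word_mono ((w @ p) @ v @ u @ s) - smul (chi q v u) (word_mono ((w @ p) @ u @ v @ s)))"
    by (rule inJ.gen) fact
  then show ?case by (simp only: tmul_diff2 tmul_smul2 tmul_word append_assoc)
qed (simp_all add: eta_add eta_sm tmul_add2 tmul_smul2 tmul_zero2 inJ.intros)

lemma inJ_rword: "inJ q f \<Longrightarrow> inJ q (tmul f (word_mono w))"
proof (induction rule: inJ.induct)
  case (gen u v p s)
  have "inJ q (word_mono (p @ v @ u @ s @ w) - smul (chi q v u) (word_mono (p @ u @ v @ s @ w)))"
    by (rule inJ.gen) fact
  then show ?case by (simp only: tmul_diff1 tmul_smul1 tmul_word append_assoc)
qed (simp_all add: eta_add eta_sm tmul_add1 tmul_smul1 tmul_zero1 inJ.intros)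

inductive inL :: "nat list \<Rightarrow> 'a::field tens \<Rightarrow> bool" for h where
  word: "mset u = mset h \<Longrightarrow> inL h (word_mono u)"
| zero: "inL h (\<lambda>_. 0)"
| add: "inL h f \<Longrightarrow> inL h g \<Longrightarrow> inL h (f + g)"
| sm: "inL h f \<Longrightarrow> inL h (smul c f)"

lemma inL_diff: "inL h f \<Longrightarrow> inL h g \<Longrightarrow> inL h (f - g)"
proof -
  assume "inL h f" "inL h g"
  then have "inL h (f + smul (-1) g)" by (intro inL.add inL.sm)
  moreover have "f + smul (-1) g = f - g" by (simp add: smul_def fun_eq_iff)
  ultimately show ?thesis by simp
qed

lemma inJ_lL: "inL xs g \<Longrightarrow> inJ q f \<Longrightarrow> inJ q (tmul g f)"
  by (induction rule: inL.induct)
     (simp_all add: eta_add eta_sm inJ_lword tmul_add1 tmul_smul1 tmul_zero1 inJ.intros)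

lemma inJ_rL: "inL xs g \<Longrightarrow> inJ q f \<Longrightarrow> inJ q (tmul f g)"
  by (induction rule: inL.induct)
     (simp_all add: eta_add eta_sm inJ_rword tmul_add2 tmul_smul2 tmul_zero2 inJ.intros)

lemma inL_tmul_word: "inL ys y \<Longrightarrow> mset u = mset xs \<Longrightarrow> inL (xs @ ys) (tmul (word_mono u) y) \<and> inL (xs @ ys) (tmul y (word_mono u))"
proof (induction rule: inL.induct)
  case (word v)
  then show ?case by (auto simp: tmul_word intro!: inL.word)
qed (auto simp: eta_add eta_sm tmul_add1 tmul_add2 tmul_smul1 tmul_smul2 tmul_zero1 tmul_zero2 intro: inL.intros)

lemma inL_tmul: "inL xs x \<Longrightarrow> inL ys y \<Longrightarrow> inL (xs @ ys) (tmul x y) \<and> inL (xs @ ys) (tmul y x)"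
proof (induction rule: inL.induct)
  case (word u)
  then show ?case using inL_tmul_word by blast
qed (auto simp: eta_add eta_sm tmul_add1 tmul_add2 tmul_smul1 tmul_smul2 tmul_zero1 tmul_zero2 intro: inL.intros)

lemma bracketing_inL: "bracketing q h s \<Longrightarrow> inL h s"
proof (induction rule: bracketing.induct)
  case (leaf h)
  then show ?case by (simp add: inL.word)
next
  case (node xs x ys y)
  then show ?case using inL_tmul[OF node.IH] unfolding lbr_def
    by (intro inL_diff inL.sm) auto
qed

lemma lbr_word_word:
  assumes "mset u = mset xs" "mset v = mset ys" "\<forall>a\<in>set xs. \<forall>b\<in>set ys. q a b * q b a = 1"
  shows "inJ q (lbr q xs ys (word_mono u) (word_mono v))"
proof -
  have "chi q ys xs = chi q v u" using chi_mset assms(1,2) by metis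
  moreover have "set u = set xs" "set v = set ys" using assms(1,2) by (metis set_mset_mset)+
  ultimately show ?thesis using inJ.gen[of u v q "[]" "[]"] assms(3)
    by (simp add: lbr_def tmul_word)
qed

lemma lbr_add1: "lbr q xs ys (f + g) y = lbr q xs ys f y + lbr q xs ys g y"
  by (simp add: lbr_def tmul_add1 tmul_add2 smul_add)
lemma lbr_add2: "lbr q xs ys x (f + g) = lbr q xs ys x f + lbr q xs ys x g"
  by (simp add: lbr_def tmul_add1 tmul_add2 smul_add)
lemma lbr_sm1: "lbr q xs ys (smul c f) y = smul c (lbr q xs ys f y)"
  by (simp add: lbr_def tmul_smul1 tmul_smul2 smul_diff smul_smul mult.commute)
lemma lbr_sm2: "lbr q xs ys x (smul c f) = smul c (lbr q xs ys x f)"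
  by (simp add: lbr_def tmul_smul1 tmul_smul2 smul_diff smul_smul mult.commute)
lemma lbr_zero1: "lbr q xs ys (\<lambda>_. 0) y = (\<lambda>_. 0)"
  by (simp add: lbr_def tmul_zero1 tmul_zero2 smul_zero zero_fun_def)
lemma lbr_zero2: "lbr q xs ys x (\<lambda>_. 0) = (\<lambda>_. 0)"
  by (simp add: lbr_def tmul_zero1 tmul_zero2 smul_zero zero_fun_def)

lemma lbr_comm_word:
  "inL ys y \<Longrightarrow> mset u = mset xs \<Longrightarrow> \<forall>a\<in>set xs. \<forall>b\<in>set ys. q a b * q b a = 1 \<Longrightarrow>
   inJ q (lbr q xs ys (word_mono u) y)"
  by (induction rule: inL.induct)
     (simp_all add: eta_add eta_sm lbr_word_word lbr_add2 lbr_sm2 lbr_zero2 inJ.intros)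

lemma lbr_comm:
  "inL xs x \<Longrightarrow> inL ys y \<Longrightarrow> \<forall>a\<in>set xs. \<forall>b\<in>set ys. q a b * q b a = 1 \<Longrightarrow>
   inJ q (lbr q xs ys x y)"
  by (induction rule: inL.induct)
     (simp_all add: eta_add eta_sm lbr_comm_word lbr_add1 lbr_sm1 lbr_zero1 inJ.intros)



lemma brk_J:
  assumes comm: "\<forall>a\<in>A. \<forall>b\<in>B. q a b * q b a = 1" and disj: "A \<inter> B = {}"
  shows "bracketing q xs s \<Longrightarrow> set xs \<subseteq> A \<union> B \<Longrightarrow> set xs \<inter> A \<noteq> {} \<Longrightarrow> set xs \<inter> B \<noteq> {} \<Longrightarrow> inJ q s"
proof (induction rule: bracketing.induct)
  case (leaf h) then show ?case using disj by auto
next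
  case (node xs x ys y)
  have sub: "set xs \<subseteq> A \<union> B" "set ys \<subseteq> A \<union> B" using node.prems by auto
  have Lx: "inL xs x" by (rule bracketing_inL[OF node.hyps(1)])
  have Ly: "inL ys y" by (rule bracketing_inL[OF node.hyps(2)])
  show ?case
  proof (cases "set xs \<inter> A \<noteq> {} \<and> set xs \<inter> B \<noteq> {}")
    case True
    then have J: "inJ q x" using node.IH(1) sub by blast
    show ?thesis unfolding lbr_def
      by (intro inJ_diff inJ.sm inJ_lL[OF Ly J] inJ_rL[OF Ly J])
  next
    case F1: False
    show ?thesis
    proof (cases "set ys \<inter> A \<noteq> {} \<and> set ys \<inter> B \<noteq> {}")
      case True
      then have J: "inJ q y" using node.IH(2) sub by blast
      show ?thesis unfolding lbr_def
        by (intro inJ_diff inJ.sm inJ_lL[OF Lx J] inJ_rL[OF Lx J])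
    next
      case F2: False
      have c: "\<forall>a\<in>set xs. \<forall>b\<in>set ys. q a b * q b a = 1"
      proof (intro ballI)
        fix a b assume a: "a \<in> set xs" and b: "b \<in> set ys"
        show "q a b * q b a = 1"
        proof (cases "a \<in> A")
          case True
          have "b \<notin> A"
          proof
            assume "b \<in> A"
            then have "set xs \<inter> B = {}" "set ys \<inter> B = {}" using F1 F2 a b True by blast+
            then show False using node.prems by auto
          qed
          then have "b \<in> B" using b sub by blast
          then show ?thesis using comm True by blast
        next
          case False
          then have aB: "a \<in> B" using a sub by blast
          have "b \<notin> B"
          proof
            assume "b \<in> B"
            then have "set xs \<inter> A = {}" "set ys \<inter> A = {}" using F1 F2 a b aB by blast+
            then show False using node.prems by auto
          qed
          then have "b \<in> A" using b sub by blast
          then show ?thesis using comm aB by (metis mult.commute)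
        qed
      qed
      show ?thesis by (rule lbr_comm[OF Lx Ly c])
    qed
  qed
qed

definition proj :: "nat list \<Rightarrow> 'a::field tens \<Rightarrow> 'a tens" where
  "proj h f = (\<lambda>W. if mset W = mset h then f W else 0)"

lemma mset_perm_word: "\<sigma> permutes {..<length w} \<Longrightarrow> mset (perm_word \<sigma> w) = mset w"
  using mset_permute_list[of \<sigma> w] by (simp add: permute_list_def perm_word_def)

lemma qsym_proj: "qsym q (proj h f) = proj h (qsym q f)"
proof (rule ext)
  fix w
  show "qsym q (proj h f) w = proj h (qsym q f) w"
  proof (cases "mset w = mset h")
    case True
    then show ?thesis unfolding qsym_def proj_def
      by (auto intro!: sum.cong simp: mset_perm_word)
  next
    case False
    then show ?thesis unfolding qsym_def proj_def
      by (auto intro!: sum.neutral simp: mset_perm_word)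
  qed
qed

lemma nz_proj: "nichols_zero q f \<Longrightarrow> nichols_zero q (proj h f)"
  unfolding nichols_zero_def qsym_proj by (simp add: proj_def)

lemma proj_diff: "proj h (f - g) = proj h f - proj h g"
  by (simp add: proj_def fun_eq_iff)
lemma proj_word: "proj h (word_mono h) = word_mono h"
  by (simp add: proj_def fun_eq_iff word_mono_def)

lemma proj_add: "proj h (f + g) = proj h f + proj h g"
  by (simp add: proj_def fun_eq_iff)
lemma proj_sm: "proj h (smul c f) = smul c (proj h f)"
  by (simp add: proj_def fun_eq_iff smul_def)

lemma proj_inL: "inL h' s \<Longrightarrow> proj h s = (if mset h' = mset h then s else (\<lambda>_. 0))"
proof (induction rule: inL.induct)
  case (word u)
  then show ?case by (auto simp: proj_def fun_eq_iff word_mono_def)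
next
  case zero
  then show ?case by (simp add: proj_def)
next
  case (add f g)
  have "proj h (f + g) = proj h f + proj h g" by (rule proj_add)
  moreover have "(\<lambda>_. 0) + (\<lambda>_. 0) = (\<lambda>_. (0::'a))" by (rule ext) simp
  ultimately show ?case
    by (cases "mset h' = mset h") (simp_all only: eta_add add.IH if_True if_False simp_thms)
next
  case (sm f c)
  have "proj h (smul c f) = smul c (proj h f)" by (rule proj_sm)
  then show ?case
    by (cases "mset h' = mset h") (simp_all only: eta_sm sm.IH if_True if_False smul_zero simp_thms)
qed

lemma nz_add: "nichols_zero q f \<Longrightarrow> nichols_zero q g \<Longrightarrow> nichols_zero q (f + g)"
  by (simp add: nichols_zero_def qsym_add fun_eq_iff)
lemma nz_sm: "nichols_zero q f \<Longrightarrow> nichols_zero q (smul c f)"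
  unfolding nichols_zero_def qsym_smul by (simp add: smul_def)
lemma nz_zero: "nichols_zero q (\<lambda>_. 0)"
  by (simp add: nichols_zero_def qsym_zero)

lemma proj_sum: "proj h (\<Sum>i<(k::nat). smul (c i) (b i)) = (\<Sum>i<k. smul (c i) (proj h (b i)))"
proof (induction k)
  case 0
  show ?case by (simp add: proj_def zero_fun_def)
next
  case (Suc k)
  show ?case by (simp only: sum.lessThan_Suc proj_add proj_sm Suc.IH)
qed

lemma nz_sum: "(\<forall>i<(k::nat). nichols_zero q (b i)) \<Longrightarrow> nichols_zero q (\<Sum>i<k. smul (c i) (b i))"
proof (induction k)
  case 0
  then show ?case using nz_zero by (simp add: zero_fun_def)
next
  case (Suc k)
  have "\<forall>i<k. nichols_zero q (b i)" using Suc.prems by auto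
  then have "nichols_zero q (\<Sum>i<k. smul (c i) (b i))" by (rule Suc.IH)
  moreover have "nichols_zero q (b k)" using Suc.prems by blast
  then have "nichols_zero q (smul (c k) (b k))" by (rule nz_sm)
  ultimately show ?case by (simp only: sum.lessThan_Suc nz_add)
qed

lemma conn_set: "set u = set v \<Longrightarrow> connected_mono q u = connected_mono q v"
  by (simp add: connected_mono_def)

lemma part2:
  assumes "\<not> connected_mono q h" "bracketing q h s"
  shows "nichols_zero q s"
proof -
  define E where "E = dynkin_edges q (set h)"
  obtain i j where ij: "i \<in> set h" "j \<in> set h" "(i,j) \<notin> E\<^sup>*"
    using assms(1) unfolding connected_mono_def E_def by blast
  define A where "A = {k \<in> set h. (i,k) \<in> E\<^sup>*}"
  define B where "B = set h - A"
  have comm: "\<forall>a\<in>A. \<forall>b\<in>B. q a b * q b a = 1"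
  proof (intro ballI)
    fix a b assume a: "a \<in> A" and b: "b \<in> B"
    show "q a b * q b a = 1"
    proof (rule ccontr)
      assume ne: "q a b * q b a \<noteq> 1"
      have "a \<noteq> b" using a b by (auto simp: B_def)
      then have "(a,b) \<in> E" using a b ne by (auto simp: E_def dynkin_edges_def A_def B_def)
      then have "(i,b) \<in> E\<^sup>*" using a by (auto simp: A_def intro: rtrancl_into_rtrancl)
      then show False using b by (auto simp: A_def B_def)
    qed
  qed
  have "i \<in> A" "j \<in> B" using ij by (auto simp: A_def B_def)
  then have "inJ q s"
    by (intro brk_J[OF comm _ assms(2)]) (auto simp: A_def B_def)
  then show ?thesis by (rule inJ_nz)
qed

theorem lemma2p2:
  fixes q :: "nat \<Rightarrow> nat \<Rightarrow> 'a::{field_char_0, alg_closed_field}" and n :: nat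
  assumes "\<forall>i<n. \<forall>j<n. q i j \<noteq> 0"
  shows "(\<forall>u v. u \<noteq> [] \<and> v \<noteq> [] \<and> set u \<subseteq> {..<n} \<and> set v \<subseteq> {..<n}
            \<and> (\<forall>i\<in>set u. \<forall>j\<in>set v. q i j * q j i = 1)
            \<longrightarrow> nichols_zero q (lbr q u v (word_mono u) (word_mono v)))
       \<and> (\<forall>h s. h \<noteq> [] \<and> set h \<subseteq> {..<n} \<and> \<not> connected_mono q h \<and> bracketing q h s
            \<longrightarrow> nichols_zero q s)
       \<and> (\<forall>h. h \<noteq> [] \<and> set h \<subseteq> {..<n} \<and> \<not> nichols_zero q (word_mono h)
            \<and> \<not> connected_mono q h
            \<longrightarrow> \<not> in_nichols_lie q n (word_mono h))"
proof (intro conjI allI impI)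
  fix u v assume H: "u \<noteq> [] \<and> v \<noteq> [] \<and> set u \<subseteq> {..<n} \<and> set v \<subseteq> {..<n}
            \<and> (\<forall>i\<in>set u. \<forall>j\<in>set v. q i j * q j i = 1)"
  then have c: "\<forall>a\<in>set u. \<forall>b\<in>set v. q a b * q b a = 1" by blast
  have "qsym q (word_mono ([] @ v @ u @ [])) = smul (chi q v u) (qsym q (word_mono ([] @ u @ v @ [])))"
    by (rule swapB[OF c])
  then have eq: "qsym q (word_mono (v @ u)) = smul (chi q v u) (qsym q (word_mono (u @ v)))"
    by (simp only: append_Nil append_Nil2)
  have "qsym q (lbr q u v (word_mono u) (word_mono v)) = 0"
    unfolding lbr_def tmul_word qsym_diff qsym_smul eq by (rule diff_self)
  then show "nichols_zero q (lbr q u v (word_mono u) (word_mono v))"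
    unfolding nichols_zero_def by (simp only: zero_fun_def)
next
  fix h s assume "h \<noteq> [] \<and> set h \<subseteq> {..<n} \<and> \<not> connected_mono q h \<and> bracketing q h s"
  then show "nichols_zero q s" using part2 by blast
next
  fix h assume H: "h \<noteq> [] \<and> set h \<subseteq> {..<n} \<and> \<not> nichols_zero q (word_mono h) \<and> \<not> connected_mono q h"
  show "\<not> in_nichols_lie q n (word_mono h)"
  proof
    assume "in_nichols_lie q n (word_mono h)"
    then obtain g where g: "g \<in> lin_span {s. \<exists>h. h \<noteq> [] \<and> set h \<subseteq> {..<n} \<and> bracketing q h s}"
      and nz: "nichols_zero q (word_mono h - g)"
      unfolding in_nichols_lie_def by blast
    obtain k c b where b: "\<forall>i<(k::nat). b i \<in> {s. \<exists>h. h \<noteq> [] \<and> set h \<subseteq> {..<n} \<and> bracketing q h s}"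
      and gdef: "g = (\<Sum>i<k. smul (c i) (b i))"
      using g unfolding lin_span_def by blast
    have "\<forall>i<k. nichols_zero q (proj h (b i))"
    proof (intro allI impI)
      fix i assume "i < k"
      then obtain h' where h': "bracketing q h' (b i)" using b by blast
      have pj: "proj h (b i) = (if mset h' = mset h then b i else (\<lambda>_. 0))"
        by (rule proj_inL[OF bracketing_inL[OF h']])
      show "nichols_zero q (proj h (b i))"
      proof (cases "mset h' = mset h")
        case True
        then have "set h' = set h" by (metis set_mset_mset)
        then have "connected_mono q h' = connected_mono q h" by (rule conn_set)
        then have "\<not> connected_mono q h'" using H by blast
        then show ?thesis using pj True part2[OF _ h'] by simp
      next
        case False
        then show ?thesis using pj nz_zero by simp
      qed
    qed
    then have nzg: "nichols_zero q (proj h g)" unfolding gdef proj_sum by (rule nz_sum[where b="\<lambda>i. proj h (b i)"])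
    have "nichols_zero q (proj h (word_mono h - g))" by (rule nz_proj[OF nz])
    then have "nichols_zero q (word_mono h - proj h g)" by (simp add: proj_diff proj_word)
    then have "nichols_zero q ((word_mono h - proj h g) + proj h g)" using nzg by (rule nz_add)
    then show False using H by (simp only: diff_add_cancel)
  qed
qed

end
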